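(* There is a partition of $\mathbb{R}^3$ into $2^{\aleph_0}$ pairwise disjoint subsets, each of which is arcwise connected and dense in $\mathbb{R}^3$.
   Context: $\mathbb{R}^3$ carries its usual Euclidean topology. *)

theory Defs
  imports "HOL-Analysis.Analysis" "HOL-Library.Equipollence"
begin

definition arcwise_connected :: "'a::topological_space set \<Rightarrow> bool" where
  "arcwise_connected S \<longleftrightarrow>
     (\<forall>x\<in>S. \<forall>y\<in>S. x \<noteq> y \<longrightarrow>
        (\<exists>g. arc g \<and> path_image g \<subseteq> S \<and> pathstart g = x \<and> pathfinish g = y))"

end

theory Submission
  imports Defs
begin

definition fS :: "real^3 \<Rightarrow> real" where
  "fS p = (if p$1 \<in> \<rat> then p$2 else p$2 - p$3)"

definition Sc :: "real \<Rightarrow> (real^3) set" where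
  "Sc c = {p. fS p - c \<in> \<rat>}"

lemma Sc_eq: "c - d \<in> \<rat> \<Longrightarrow> Sc c = Sc d"
proof -
  assume h: "c - d \<in> \<rat>"
  have "fS p - c \<in> \<rat> \<longleftrightarrow> fS p - d \<in> \<rat>" for p
  proof
    assume "fS p - c \<in> \<rat>" then have "(fS p - c) + (c - d) \<in> \<rat>" using h Rats_add by blast
    then show "fS p - d \<in> \<rat>" by simp
  next
    assume "fS p - d \<in> \<rat>" then have "(fS p - d) - (c - d) \<in> \<rat>" using h Rats_diff by blast
    then show "fS p - c \<in> \<rat>" by simp
  qed
  then show ?thesis unfolding Sc_def by auto
qed

lemma Sc_meet: "p \<in> Sc c \<Longrightarrow> p \<in> Sc d \<Longrightarrow> c - d \<in> \<rat>"
proof -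
  assume "p \<in> Sc c" "p \<in> Sc d"
  then have "(fS p - d) - (fS p - c) \<in> \<rat>" unfolding Sc_def using Rats_diff by blast
  then show ?thesis by simp
qed

lemma vec3_eta: "(p::real^3) = vector [p$1, p$2, p$3]"
  by (simp add: vec_eq_iff forall_3 vector_3)

lemma seg_comp:
  "((1-u) *\<^sub>R vector [a1,a2,a3] + u *\<^sub>R vector [b1,b2,b3] :: real^3) $ 1 = (1-u)*a1 + u*b1"
  "((1-u) *\<^sub>R vector [a1,a2,a3] + u *\<^sub>R vector [b1,b2,b3] :: real^3) $ 2 = (1-u)*a2 + u*b2"
  "((1-u) *\<^sub>R vector [a1,a2,a3] + u *\<^sub>R vector [b1,b2,b3] :: real^3) $ 3 = (1-u)*a3 + u*b3"
  by (simp_all add: vector_3)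

lemma seg_pc: "closed_segment (a::real^3) b \<subseteq> S \<Longrightarrow> path_component S a b"
  unfolding path_component_def
  by (rule exI[of _ "linepath a b"]) auto

lemma segH:
  assumes "y - c \<in> \<rat>" "s \<in> \<rat>"
  shows "closed_segment (vector [w1, y, s]) (vector [w2, y, s]) \<subseteq> Sc c"
proof
  fix p assume "p \<in> closed_segment (vector [w1, y, s]) (vector [w2, y, s] :: real^3)"
  then obtain u where p: "p = (1-u) *\<^sub>R vector [w1, y, s] + u *\<^sub>R vector [w2, y, s]"
    unfolding closed_segment_def by auto
  have 2: "p$2 = y" "p$3 = s" unfolding p seg_comp by (simp_all add: algebra_simps)
  have "y - s - c \<in> \<rat>"
  proof -
    have "(y - c) - s \<in> \<rat>" using assms Rats_diff by blast
    then show ?thesis by (simp add: algebra_simps)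
  qed
  then show "p \<in> Sc c" unfolding Sc_def fS_def using 2 assms by auto
qed

lemma segV:
  assumes "q \<in> \<rat>" "y - c \<in> \<rat>"
  shows "closed_segment (vector [q, y, z1]) (vector [q, y, z2]) \<subseteq> Sc c"
proof
  fix p assume "p \<in> closed_segment (vector [q, y, z1]) (vector [q, y, z2] :: real^3)"
  then obtain u where p: "p = (1-u) *\<^sub>R vector [q, y, z1] + u *\<^sub>R vector [q, y, z2]"
    unfolding closed_segment_def by auto
  have 2: "p$1 = q" "p$2 = y" unfolding p seg_comp by (simp_all add: algebra_simps)
  then show "p \<in> Sc c" unfolding Sc_def fS_def using assms by auto
qed

lemma segD:
  assumes "a \<notin> \<rat>" "y1 - z1 = y2 - z2" "y1 - z1 - c \<in> \<rat>"
  shows "closed_segment (vector [a, y1, z1]) (vector [a, y2, z2]) \<subseteq> Sc c"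
proof
  fix p assume "p \<in> closed_segment (vector [a, y1, z1]) (vector [a, y2, z2] :: real^3)"
  then obtain u where p: "p = (1-u) *\<^sub>R vector [a, y1, z1] + u *\<^sub>R vector [a, y2, z2]"
    unfolding closed_segment_def by auto
  have 1: "p$1 = a" unfolding p seg_comp by (simp add: algebra_simps)
  have "p$2 - p$3 = (1-u)*(y1 - z1) + u*(y2-z2)" unfolding p seg_comp by (simp add: algebra_simps)
  also have "\<dots> = (1-u)*(y1 - z1) + u*(y1-z1)" using assms(2) by simp
  also have "\<dots> = y1 - z1" by (simp add: algebra_simps)
  finally show "p \<in> Sc c" unfolding Sc_def fS_def using 1 assms by auto
qed

lemma irr_ex: "\<exists>a::real. a \<notin> \<rat>"
  using uncountable_UNIV_real countable_rat by (metis UNIV_eq_I)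

lemma pcW:
  assumes "y - c \<in> \<rat>"
  shows "path_component (Sc c) (vector [w, y, 0]) (vector [0, c, 0])"
proof -
  obtain a :: real where a: "a \<notin> \<rat>" using irr_ex by blast
  define r where "r = y - c"
  have r: "r \<in> \<rat>" using assms r_def by simp
  have 1: "path_component (Sc c) (vector [w, y, 0]) (vector [a, y, 0])"
    by (rule seg_pc, rule segH) (use assms in auto)
  have 2: "path_component (Sc c) (vector [a, y, 0]) (vector [a, c, -r])"
    by (rule seg_pc, rule segD) (use a assms r_def in auto)
  have 3: "path_component (Sc c) (vector [a, c, -r]) (vector [0, c, -r])"
    by (rule seg_pc, rule segH) (use r in auto)
  have 4: "path_component (Sc c) (vector [0, c, -r]) (vector [0, c, 0])"
    by (rule seg_pc, rule segV) auto
  show ?thesis using path_component_trans[OF path_component_trans[OF path_component_trans[OF 1 2] 3] 4] .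
qed

lemma pc_base:
  assumes "p \<in> Sc c"
  shows "path_component (Sc c) p (vector [0, c, 0])"
proof (cases "p$1 \<in> \<rat>")
  case True
  then have y: "p$2 - c \<in> \<rat>" using assms unfolding Sc_def fS_def by auto
  have "path_component (Sc c) (vector [p$1, p$2, p$3]) (vector [p$1, p$2, 0])"
    by (rule seg_pc, rule segV) (use True y in auto)
  then have "path_component (Sc c) p (vector [p$1, p$2, 0])" using vec3_eta[of p] by simp
  then show ?thesis using pcW[OF y, of "p$1"] path_component_trans by blast
next
  case False
  then have y: "p$2 - p$3 - c \<in> \<rat>" using assms unfolding Sc_def fS_def by auto
  have "path_component (Sc c) (vector [p$1, p$2, p$3]) (vector [p$1, p$2 - p$3, 0])"
    by (rule seg_pc, rule segD) (use False y in auto)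
  then have "path_component (Sc c) p (vector [p$1, p$2 - p$3, 0])" using vec3_eta[of p] by simp
  then show ?thesis using pcW[OF y, of "p$1"] path_component_trans by blast
qed

lemma Sc_pc: "path_connected (Sc c)"
  unfolding path_connected_component
proof (intro ballI)
  fix x y assume "x \<in> Sc c" "y \<in> Sc c"
  then have "path_component (Sc c) x (vector [0, c, 0])" "path_component (Sc c) (vector [0, c, 0]) y"
    using pc_base path_component_sym by blast+
  then show "path_component (Sc c) x y" by (rule path_component_trans)
qed

lemma Sc_arc: "arcwise_connected (Sc c)"
  using Sc_pc path_connected_arcwise unfolding arcwise_connected_def by blast

lemma Sc_dense: "closure (Sc c) = UNIV"
proof -
  have "p \<in> closure (Sc c)" for p :: "real^3"
    unfolding closure_approachable
  proof (intro allI impI)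
    fix e :: real assume e: "e > 0"
    obtain q1 where q1: "q1 \<in> \<rat>" "p$1 < q1" "q1 < p$1 + e/2"
      using Rats_dense_in_real[of "p$1" "p$1 + e/2"] e by auto
    obtain q2 where q2: "q2 \<in> \<rat>" "p$2 - c < q2" "q2 < p$2 - c + e/2"
      using Rats_dense_in_real[of "p$2 - c" "p$2 - c + e/2"] e by auto
    define y :: "real^3" where "y = vector [q1, c + q2, p$3]"
    have "y \<in> Sc c" unfolding y_def Sc_def fS_def using q1 q2 by (simp add: vector_3)
    moreover have "dist y p < e"
    proof -
      have "dist y p = norm (y - p)" by (simp add: dist_norm)
      also have "\<dots> \<le> (\<Sum>i\<in>UNIV. \<bar>(y - p)$i\<bar>)" by (rule norm_le_l1_cart)
      also have "\<dots> = \<bar>q1 - p$1\<bar> + \<bar>c + q2 - p$2\<bar>"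
        by (simp add: sum_3 y_def vector_3)
      also have "\<dots> < e" using q1 q2 by auto
      finally show ?thesis .
    qed
    ultimately show "\<exists>y\<in>Sc c. dist y p < e" by blast
  qed
  then show ?thesis by auto
qed

unbundle cardinal_syntax

lemma card_part: "range Sc \<approx> (UNIV :: nat set set)"
proof -
  define P where "P = range Sc"
  define rep where "rep X = (SOME c. X = Sc c)" for X
  have rep: "Sc (rep (Sc r)) = Sc r" for r
    unfolding rep_def by (rule someI_ex[where P="\<lambda>c. Sc r = Sc c", THEN sym]) auto
  have rdiff: "r - rep (Sc r) \<in> \<rat>" for r
  proof -
    have "fS (vector [0, r, 0]) = r" by (simp add: fS_def vector_3)
    then have "vector [0, r, 0] \<in> Sc r" unfolding Sc_def by simp
    then have "vector [0, r, 0] \<in> Sc (rep (Sc r))" using rep by simp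
    then show ?thesis using Sc_meet \<open>vector [0, r, 0] \<in> Sc r\<close> by blast
  qed
  have RP: "(UNIV::real set) \<lesssim> P \<times> (\<rat>::real set)"
    unfolding lepoll_def
  proof (intro exI conjI)
    show "inj_on (\<lambda>r. (Sc r, r - rep (Sc r))) UNIV"
      by (rule inj_onI) auto
    show "(\<lambda>r. (Sc r, r - rep (Sc r))) ` UNIV \<subseteq> P \<times> (\<rat>::real set)"
      using rdiff unfolding P_def by auto
  qed
  have inf: "infinite P"
  proof
    assume "finite P"
    then have "countable (P \<times> (\<rat>::real set))" using countable_rat by (intro countable_SIGMA) (auto intro: countable_finite)
    then have "countable (UNIV::real set)" using RP countable_lepoll by blast
    then show False using uncountable_UNIV_real by blast
  qed
  have "(\<rat>::real set) \<lesssim> (UNIV::nat set)"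
    using countable_rat unfolding countable_def lepoll_def by blast
  also have "(UNIV::nat set) \<lesssim> P" using inf infinite_le_lepoll by blast
  finally have QP: "(\<rat>::real set) \<lesssim> P" .
  have "|(\<rat>::real set)| \<le>o |P|" using QP card_of_ordLeq[of "(\<rat>::real set)" P] unfolding lepoll_def by blast
  then have "|P \<times> (\<rat>::real set)| =o |P|"
    using card_of_Times_infinite[OF inf, of "(\<rat>::real set)"] by auto
  then have "|P \<times> (\<rat>::real set)| \<le>o |P|" using ordIso_iff_ordLeq by blast
  then have "P \<times> (\<rat>::real set) \<lesssim> P"
    using card_of_ordLeq[of "P \<times> (\<rat>::real set)" P] unfolding lepoll_def by blast
  with RP have "(UNIV::real set) \<lesssim> P" using lepoll_trans by blast
  moreover have "P \<lesssim> (UNIV::real set)" unfolding P_def by (rule image_lepoll)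
  ultimately have "P \<approx> (UNIV::real set)" by (rule lepoll_antisym[rotated])
  then show ?thesis unfolding P_def
    using eqpoll_trans eqpoll_sym nat_sets_eqpoll_reals by blast
qed

theorem theorem1:
  shows "\<exists>P :: (real^3) set set.
           \<Union>P = UNIV \<and> {} \<notin> P \<and> disjoint P \<and>
           P \<approx> (UNIV :: nat set set) \<and>
           (\<forall>S\<in>P. arcwise_connected S \<and> closure S = UNIV)"
proof (intro exI conjI)
  show "\<Union>(range Sc) = UNIV"
  proof -
    have "p \<in> Sc (fS p)" for p unfolding Sc_def by simp
    then show ?thesis by blast
  qed
  show "{} \<notin> range Sc"
  proof
    assume "{} \<in> range Sc"
    then obtain c where "Sc c = {}" by auto
    moreover have "vector [0, c, 0] \<in> Sc c" unfolding Sc_def fS_def by (simp add: vector_3)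
    ultimately show False by simp
  qed
  show "disjoint (range Sc)"
    unfolding pairwise_def disjnt_def
    using Sc_meet Sc_eq by blast
  show "range Sc \<approx> (UNIV :: nat set set)" by (rule card_part)
  show "\<forall>S\<in>range Sc. arcwise_connected S \<and> closure S = UNIV"
    using Sc_arc Sc_dense by blast
qed

end
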